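(* Every signed digraph $G$ on $[n]$ ($n\geq 1$) admits a nilpotent function $f:\{0,1,2\}^n\to\{0,1,2\}^n$ of class at most $\lfloor\log_2 n\rfloor+2$.
   Context: A signed digraph is a digraph (loops allowed, no multiple arcs) in which each arc is labeled positive, negative, or null (unsigned). For a finite interval of integers $A$, a function over $A$ is a map $f:A^n\to A^n$; $f^0=\mathrm{id}$, $f^k=f\circ f^{k-1}$. The interaction graph $G(f)$ is the signed digraph on $[n]$ with an arc $(j,i)$ iff $f_i(a)\neq f_i(b)$ for some $a,b\in A^n$ with $a_j<b_j$ and $a_\ell=b_\ell$ for $\ell\neq j$; the arc is positive if $f_i(a)\leq f_i(b)$ for all such pairs, negative if $f_i(a)\geq f_i(b)$ for all such pairs, and null otherwise. $G$ admits $f$ if $G(f)=G$. $f$ is nilpotent if $f^k$ is constant for some $k\geq 0$; the least such $k$ is its class. *)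

theory Defs
  imports Complex_Main
begin

text \<open>Vertices of the digraph are 0,...,n-1 (standing for [n] = {1..n}).
  Configurations in A^n with A = {0..<q} are represented as functions nat => nat
  that take values in {0..<q} on the indices < n and are 0 elsewhere.\<close>

datatype sign = Pos | Neg | Null

text \<open>A signed digraph on n vertices: G j i = None means no arc (j,i);
  G j i = Some s means an arc (j,i) with sign s. Loops allowed, no multiple arcs.\<close>
type_synonym sdigraph = "nat \<Rightarrow> nat \<Rightarrow> sign option"

definition sdigraph_on :: "nat \<Rightarrow> sdigraph \<Rightarrow> bool" where
  "sdigraph_on n G \<longleftrightarrow> (\<forall>j i. (j \<ge> n \<or> i \<ge> n) \<longrightarrow> G j i = None)"

definition configs :: "nat \<Rightarrow> nat \<Rightarrow> (nat \<Rightarrow> nat) set" where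
  "configs q n = {x. (\<forall>i<n. x i < q) \<and> (\<forall>i\<ge>n. x i = 0)}"

definition is_fun_over :: "nat \<Rightarrow> nat \<Rightarrow> ((nat \<Rightarrow> nat) \<Rightarrow> (nat \<Rightarrow> nat)) \<Rightarrow> bool" where
  "is_fun_over q n f \<longleftrightarrow> (\<forall>x \<in> configs q n. f x \<in> configs q n)"

definition jpairs :: "nat \<Rightarrow> nat \<Rightarrow> nat \<Rightarrow> ((nat \<Rightarrow> nat) \<times> (nat \<Rightarrow> nat)) set" where
  "jpairs q n j = {(a, b). a \<in> configs q n \<and> b \<in> configs q n \<and> a j < b j
                           \<and> (\<forall>l. l \<noteq> j \<longrightarrow> a l = b l)}"

definition interaction_graph ::
  "nat \<Rightarrow> nat \<Rightarrow> ((nat \<Rightarrow> nat) \<Rightarrow> (nat \<Rightarrow> nat)) \<Rightarrow> sdigraph" where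
  "interaction_graph q n f j i =
     (if j < n \<and> i < n \<and> (\<exists>(a, b) \<in> jpairs q n j. f a i \<noteq> f b i) then
        Some (if (\<forall>(a, b) \<in> jpairs q n j. f a i \<le> f b i) then Pos
              else if (\<forall>(a, b) \<in> jpairs q n j. f a i \<ge> f b i) then Neg
              else Null)
      else None)"

definition admits :: "nat \<Rightarrow> nat \<Rightarrow> sdigraph \<Rightarrow> ((nat \<Rightarrow> nat) \<Rightarrow> (nat \<Rightarrow> nat)) \<Rightarrow> bool" where
  "admits q n G f \<longleftrightarrow> interaction_graph q n f = G"

definition const_iter :: "nat \<Rightarrow> nat \<Rightarrow> ((nat \<Rightarrow> nat) \<Rightarrow> (nat \<Rightarrow> nat)) \<Rightarrow> nat \<Rightarrow> bool" where
  "const_iter q n f k \<longleftrightarrow> (\<exists>c. \<forall>x \<in> configs q n. (f ^^ k) x = c)"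

definition nilpotent :: "nat \<Rightarrow> nat \<Rightarrow> ((nat \<Rightarrow> nat) \<Rightarrow> (nat \<Rightarrow> nat)) \<Rightarrow> bool" where
  "nilpotent q n f \<longleftrightarrow> (\<exists>k. const_iter q n f k)"

definition nil_class :: "nat \<Rightarrow> nat \<Rightarrow> ((nat \<Rightarrow> nat) \<Rightarrow> (nat \<Rightarrow> nat)) \<Rightarrow> nat" where
  "nil_class q n f = (LEAST k. const_iter q n f k)"

end

theory Submission imports Defs begin

lemma configs_upd: "a \<in> configs q n \<Longrightarrow> j < n \<Longrightarrow> w < q \<Longrightarrow> a(j:=w) \<in> configs q n"
  by (auto simp: configs_def)

lemma jpairs_D: "(a,b) \<in> jpairs q n j \<Longrightarrow> a \<in> configs q n \<and> b \<in> configs q n \<and> a j < b j \<and> b = a(j := b j)"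
  by (auto simp: jpairs_def)

lemma jpairs_I: "a \<in> configs q n \<Longrightarrow> j < n \<Longrightarrow> a j < w \<Longrightarrow> w < q \<Longrightarrow> (a, a(j:=w)) \<in> jpairs q n j"
  by (auto simp: jpairs_def configs_upd)

lemma ig_out: "\<not> (j < n \<and> i < n) \<Longrightarrow> interaction_graph q n f j i = None"
  by (auto simp: interaction_graph_def)

lemma ig_none: "(\<And>a b. (a,b) \<in> jpairs q n j \<Longrightarrow> f a i = f b i) \<Longrightarrow> interaction_graph q n f j i = None"
  by (auto simp: interaction_graph_def)

lemma ig_neg:
  assumes "j < n" "i < n" "\<And>a b. (a,b) \<in> jpairs q n j \<Longrightarrow> f a i \<ge> f b i"
    "(a0,b0) \<in> jpairs q n j" "f a0 i > f b0 i"
  shows "interaction_graph q n f j i = Some Neg"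
proof -
  have "\<exists>(a, b) \<in> jpairs q n j. f a i \<noteq> f b i" using assms(4,5) by (auto intro!: bexI[where x="(a0,b0)"])
  moreover have "\<not> (\<forall>(a, b) \<in> jpairs q n j. f a i \<le> f b i)"
  proof
    assume h: "\<forall>(a, b) \<in> jpairs q n j. f a i \<le> f b i"
    have "f a0 i \<le> f b0 i" using h assms(4) by auto
    thus False using assms(5) by simp
  qed
  moreover have "(\<forall>(a, b) \<in> jpairs q n j. f a i \<ge> f b i)" using assms(3) by blast
  ultimately show ?thesis using assms(1,2) unfolding interaction_graph_def by simp
qed

lemma ig_null:
  assumes "j < n" "i < n"
    "(a0,b0) \<in> jpairs q n j" "f a0 i < f b0 i"
    "(a1,b1) \<in> jpairs q n j" "f a1 i > f b1 i"
  shows "interaction_graph q n f j i = Some Null"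
proof -
  have "\<exists>(a, b) \<in> jpairs q n j. f a i \<noteq> f b i" using assms(3,4) by (auto intro!: bexI[where x="(a0,b0)"])
  moreover have "\<not> (\<forall>(a, b) \<in> jpairs q n j. f a i \<le> f b i)"
  proof
    assume h: "\<forall>(a, b) \<in> jpairs q n j. f a i \<le> f b i"
    have "f a1 i \<le> f b1 i" using h assms(5) by auto
    thus False using assms(6) by simp
  qed
  moreover have "\<not> (\<forall>(a, b) \<in> jpairs q n j. f a i \<ge> f b i)"
  proof
    assume h: "\<forall>(a, b) \<in> jpairs q n j. f a i \<ge> f b i"
    have "f a0 i \<ge> f b0 i" using h assms(3) by auto
    thus False using assms(4) by simp
  qed
  ultimately show ?thesis using assms(1,2) unfolding interaction_graph_def by simp
qed

lemma ig_pos: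
  assumes "j < n" "i < n" "\<And>a b. (a,b) \<in> jpairs q n j \<Longrightarrow> f a i \<le> f b i"
    "(a0,b0) \<in> jpairs q n j" "f a0 i < f b0 i"
  shows "interaction_graph q n f j i = Some Pos"
proof -
  have "\<exists>(a, b) \<in> jpairs q n j. f a i \<noteq> f b i" using assms(4,5) by (auto intro!: bexI[where x="(a0,b0)"])
  moreover have "(\<forall>(a, b) \<in> jpairs q n j. f a i \<le> f b i)" using assms(3) by blast
  ultimately show ?thesis using assms(1,2) unfolding interaction_graph_def by simp
qed

lemma log_bound:
  assumes "2^k \<le> (n::nat)"
  shows "k \<le> nat \<lfloor>log 2 (real n)\<rfloor>"
proof -
  have pos: "(0::real) < 2^k" by simp
  have r: "(2::real)^k \<le> real n" using assms by (metis of_nat_le_iff of_nat_numeral of_nat_power)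
  have e: "log 2 ((2::real) ^ k) = real k" by (rule log_pow_cancel) simp_all
  have "log 2 ((2::real) ^ k) \<le> log 2 (real n)" by (rule log_mono) (use pos r in simp_all)
  hence "real k \<le> log 2 (real n)" using e by simp
  hence "int k \<le> \<lfloor>log 2 (real n)\<rfloor>" by (simp add: le_floor_iff)
  thus ?thesis by simp
qed

definition lit :: "sign \<Rightarrow> nat" where
  "lit s = (case s of Pos \<Rightarrow> 2 | Neg \<Rightarrow> 0 | Null \<Rightarrow> 1)"

lemma lit_less: "lit s < 3" by (cases s) (auto simp: lit_def)


locale L =
  fixes n :: nat and G :: sdigraph
  assumes sd: "sdigraph_on n G"
begin

lemma arc_lt: "G j i \<noteq> None \<Longrightarrow> j < n \<and> i < n"
  using sd unfolding sdigraph_on_def by (metis not_le)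

definition hasin :: "nat \<Rightarrow> bool" where "hasin i \<longleftrightarrow> (\<exists>j. G j i \<noteq> None)"
definition par :: "nat \<Rightarrow> nat" where
  "par i = (if i < n \<and> hasin i then (LEAST j. G j i \<noteq> None) else n)"
definition desc :: "nat \<Rightarrow> nat set" where "desc v = {u. u < n \<and> (\<exists>m. (par ^^ m) u = v)}"
definition sz :: "nat \<Rightarrow> nat" where "sz v = card (desc v)"
definition children :: "nat \<Rightarrow> nat set" where "children j = {i. i < n \<and> hasin i \<and> par i = j}"
definition want :: "nat \<Rightarrow> bool" where "want i \<longleftrightarrow> G (par i) i = Some Null"
definition tau :: "nat \<Rightarrow> bool" where
  "tau j \<longleftrightarrow> (\<exists>c\<in>children j. want c \<and> (\<forall>d\<in>children j. sz d \<le> sz c))"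
definition hv :: "nat \<Rightarrow> nat" where "hv j = (if tau j then 1 else 2)"
definition hi :: "nat \<Rightarrow> nat" where "hi j = (if tau j then 2 else 1)"
definition Kset :: "nat \<Rightarrow> nat set" where "Kset i = {k. G k i \<noteq> None \<and> k \<noteq> par i}"
definition gstar :: "nat \<Rightarrow> bool" where "gstar i \<longleftrightarrow> (tau (par i) \<or> G (par i) i = Some Pos)"
definition gate :: "nat \<Rightarrow> (nat \<Rightarrow> nat) \<Rightarrow> bool" where
  "gate i x \<longleftrightarrow> (if Kset i = {} then gstar i else (\<forall>k\<in>Kset i. x k = lit (the (G k i))))"
definition phi :: "nat \<Rightarrow> nat \<Rightarrow> bool" where
  "phi i v \<longleftrightarrow> (if tau (par i)
      then (G (par i) i = Some Pos \<and> v = 2 \<or> G (par i) i = Some Neg \<and> v = 0)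
      else (G (par i) i = Some Neg \<or> G (par i) i = Some Null \<and> v = 1))"
definition Bf :: "nat \<Rightarrow> (nat \<Rightarrow> nat) \<Rightarrow> bool" where
  "Bf i x \<longleftrightarrow> (if x (par i) = hv (par i) then gate i x else phi i (x (par i)))"
definition F :: "(nat \<Rightarrow> nat) \<Rightarrow> (nat \<Rightarrow> nat)" where
  "F x = (\<lambda>i. if i < n \<and> hasin i \<and> Bf i x then hi i else 0)"

lemma par_arc: "i < n \<Longrightarrow> hasin i \<Longrightarrow> G (par i) i \<noteq> None"
  using LeastI_ex[of "\<lambda>j. G j i \<noteq> None"] unfolding par_def hasin_def by auto

lemma par_lt: "i < n \<Longrightarrow> hasin i \<Longrightarrow> par i < n"
  using par_arc arc_lt by blast

lemma hi_pos: "0 < hi j" and hi_lt: "hi j < 3" and hv_ne0: "hv j \<noteq> 0" and hv_ne_hi: "hv j \<noteq> hi j"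
  and hv_lt: "hv j < 3"
  by (auto simp: hi_def hv_def)

lemma Kset_lt: "k \<in> Kset i \<Longrightarrow> k < n" using arc_lt by (auto simp: Kset_def)
lemma par_notin_Kset: "par i \<notin> Kset i" by (auto simp: Kset_def)

lemma F_lt: "F x i < 3" using hi_lt by (auto simp: F_def)
lemma F_out: "\<not> (i < n \<and> hasin i) \<Longrightarrow> F x i = 0" by (auto simp: F_def)

lemma F_configs: "F x \<in> configs 3 n"
  unfolding configs_def using F_lt F_out by auto

lemma F_avoid: "F x j \<noteq> hv j"
  by (simp add: F_def hi_def hv_def)

lemma gate_local:
  assumes "\<And>k. k \<in> Kset i \<Longrightarrow> x k = y k" shows "gate i x = gate i y"
  using assms unfolding gate_def by auto

lemma F_local:
  assumes "\<And>k. G k i \<noteq> None \<Longrightarrow> x k = y k" shows "F x i = F y i"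
proof (cases "i < n \<and> hasin i")
  case True
  have p: "x (par i) = y (par i)" using assms par_arc True by blast
  have g: "gate i x = gate i y" by (rule gate_local) (use assms in \<open>auto simp: Kset_def\<close>)
  have "Bf i x = Bf i y" unfolding Bf_def using p g by simp
  thus ?thesis by (simp add: F_def)
qed (simp add: F_out)

lemma gate_ex:
  assumes "Kset i = {} \<Longrightarrow> g = gstar i"
  shows "\<exists>x\<in>configs 3 n. gate i x = g"
proof -
  define x where "x = (\<lambda>k. if k \<in> Kset i then (if g then lit (the (G k i)) else (lit (the (G k i)) + 1) mod 3) else 0)"
  have nk: "\<And>k. n \<le> k \<Longrightarrow> k \<notin> Kset i" using Kset_lt by (meson not_less)
  have xc: "x \<in> configs 3 n" unfolding configs_def x_def using nk lit_less by auto
  have "gate i x = g"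
  proof (cases "Kset i = {}")
    case True thus ?thesis using assms by (simp add: gate_def)
  next
    case False
    then obtain k0 where k0: "k0 \<in> Kset i" by blast
    show ?thesis
    proof (cases g)
      case True thus ?thesis using False by (auto simp: gate_def x_def)
    next
      case F: False
      have "x k0 \<noteq> lit (the (G k0 i))" using k0 F lit_less[of "the (G k0 i)"] unfolding x_def
        by (auto simp: mod_if)
      thus ?thesis using F False k0 by (auto simp: gate_def)
    qed
  qed
  thus ?thesis using xc by blast
qed


definition R :: "nat \<Rightarrow> nat \<Rightarrow> bool \<Rightarrow> nat" where
  "R i v g = (if (if v = hv (par i) then g else phi i v) then hi i else 0)"

lemma F_row: "i < n \<Longrightarrow> hasin i \<Longrightarrow> F x i = R i (x (par i)) (gate i x)"
  by (simp add: F_def Bf_def R_def)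

lemma three_cases: "v < w \<Longrightarrow> w < (3::nat) \<Longrightarrow> (v = 0 \<and> w = 1) \<or> (v = 0 \<and> w = 2) \<or> (v = 1 \<and> w = 2)"
  by arith

lemma row_mono_pos: "G (par i) i = Some Pos \<Longrightarrow> v < w \<Longrightarrow> w < 3 \<Longrightarrow> R i v g \<le> R i w g"
  using three_cases[of v w] by (auto simp: R_def hv_def phi_def)

lemma row_mono_neg: "G (par i) i = Some Neg \<Longrightarrow> v < w \<Longrightarrow> w < 3 \<Longrightarrow> R i v g \<ge> R i w g"
  using three_cases[of v w] by (auto simp: R_def hv_def phi_def)

lemma row_wit_pos: "G (par i) i = Some Pos \<Longrightarrow> R i 0 (gstar i) < R i 2 (gstar i)"
  using hi_pos[of i] by (auto simp: R_def hv_def phi_def gstar_def)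

lemma row_wit_neg: "G (par i) i = Some Neg \<Longrightarrow> R i 0 (gstar i) > R i 2 (gstar i)"
  using hi_pos[of i] by (auto simp: R_def hv_def phi_def gstar_def)

lemma row_wit_null:
  assumes G: "G (par i) i = Some Null"
  shows "R i 0 (gstar i) < R i 1 (gstar i) \<and> R i 1 (gstar i) > R i 2 (gstar i)"
proof -
  have ph: "phi i v = (\<not> tau (par i) \<and> v = 1)" for v using G by (simp add: phi_def)
  have gs: "gstar i = tau (par i)" using G by (simp add: gstar_def)
  show ?thesis using hi_pos[of i] by (cases "tau (par i)") (simp_all add: R_def hv_def ph gs)
qed

lemma ig_par:
  assumes i: "i < n" "hasin i" and j: "j = par i"
  shows "interaction_graph 3 n F j i = G j i"
proof -
  have jn: "j < n" using par_lt i j by simp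
  obtain s where s: "G j i = Some s" using par_arc[OF i] j by (metis not_None_eq)
  have ginv: "gate i (x(j:=v)) = gate i x" for x v
    by (rule gate_local) (use par_notin_Kset j in auto)
  have pairF: "F a i = R i (a j) (gate i a) \<and> F b i = R i (b j) (gate i a)" if "(a,b) \<in> jpairs 3 n j" for a b
  proof -
    have "b = a(j := b j)" using jpairs_D[OF that] by blast
    hence "gate i b = gate i a" using ginv by metis
    thus ?thesis using F_row[OF i] j by simp
  qed
  have pairD: "a j < b j \<and> b j < 3" if "(a,b) \<in> jpairs 3 n j" for a b
    using jpairs_D[OF that] jn by (auto simp: configs_def)
  obtain x where x: "x \<in> configs 3 n" "gate i x = gstar i" using gate_ex by blast
  have Fx: "F (x(j:=v)) i = R i v (gstar i)" for v
    using F_row[OF i] j ginv x(2) by simp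
  have wp: "(x(j:=v), x(j:=w)) \<in> jpairs 3 n j" if "v < w" "w < 3" for v w
  proof -
    have "x(j:=v) \<in> configs 3 n" using configs_upd[OF x(1) jn] that by simp
    from jpairs_I[OF this jn] that show ?thesis by simp
  qed
  show ?thesis
  proof (cases s)
    case Pos
    have G: "G (par i) i = Some Pos" using s Pos j by simp
    show ?thesis unfolding s Pos
    proof (rule ig_pos[OF jn i(1)])
      fix a b assume ab: "(a,b) \<in> jpairs 3 n j"
      show "F a i \<le> F b i" using pairF[OF ab] pairD[OF ab] row_mono_pos[OF G] by simp
    next
      show "(x(j:=0), x(j:=2)) \<in> jpairs 3 n j" using wp by simp
      show "F (x(j:=0)) i < F (x(j:=2)) i" using Fx row_wit_pos[OF G] by simp
    qed
  next
    case Neg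
    have G: "G (par i) i = Some Neg" using s Neg j by simp
    show ?thesis unfolding s Neg
    proof (rule ig_neg[OF jn i(1)])
      fix a b assume ab: "(a,b) \<in> jpairs 3 n j"
      show "F a i \<ge> F b i" using pairF[OF ab] pairD[OF ab] row_mono_neg[OF G] by simp
    next
      show "(x(j:=0), x(j:=2)) \<in> jpairs 3 n j" using wp by simp
      show "F (x(j:=0)) i > F (x(j:=2)) i" using Fx row_wit_neg[OF G] by simp
    qed
  next
    case Null
    have G: "G (par i) i = Some Null" using s Null j by simp
    show ?thesis unfolding s Null
    proof (rule ig_null[OF jn i(1)])
      show "(x(j:=0), x(j:=1)) \<in> jpairs 3 n j" using wp by simp
      show "F (x(j:=0)) i < F (x(j:=1)) i" using Fx row_wit_null[OF G] by simp
      show "(x(j:=1), x(j:=2)) \<in> jpairs 3 n j" using wp by simp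
      show "F (x(j:=1)) i > F (x(j:=2)) i" using Fx row_wit_null[OF G] by simp
    qed
  qed
qed

lemma gate_upd:
  assumes j: "j \<in> Kset i"
  shows "gate i (x(j:=w)) \<longleftrightarrow> (w = lit (the (G j i)) \<and> gate i (x(j := lit (the (G j i)))))"
proof -
  have ne: "Kset i \<noteq> {}" using j by blast
  have "(\<forall>k\<in>Kset i. (x(j:=w)) k = lit (the (G k i))) \<longleftrightarrow>
        (w = lit (the (G j i)) \<and> (\<forall>k\<in>Kset i. (x(j:=lit (the (G j i)))) k = lit (the (G k i))))"
  proof
    assume h: "\<forall>k\<in>Kset i. (x(j:=w)) k = lit (the (G k i))"
    have w: "w = lit (the (G j i))" using h j by (metis fun_upd_same)
    show "w = lit (the (G j i)) \<and> (\<forall>k\<in>Kset i. (x(j:=lit (the (G j i)))) k = lit (the (G k i)))"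
      using h w by blast
  next
    assume "w = lit (the (G j i)) \<and> (\<forall>k\<in>Kset i. (x(j:=lit (the (G j i)))) k = lit (the (G k i)))"
    thus "\<forall>k\<in>Kset i. (x(j:=w)) k = lit (the (G k i))" by blast
  qed
  thus ?thesis unfolding gate_def using ne by simp
qed

lemma ig_K:
  assumes i: "i < n" and j: "j \<in> Kset i"
  shows "interaction_graph 3 n F j i = G j i"
proof -
  have hin: "hasin i" using j by (auto simp: Kset_def hasin_def)
  have jn: "j < n" using Kset_lt j by simp
  define p where "p = par i"
  have pn: "p < n" using par_lt[OF i hin] p_def by simp
  have jp: "j \<noteq> p" using j p_def by (auto simp: Kset_def)
  have "G j i \<noteq> None" using j by (simp add: Kset_def)
  then obtain s where s: "G j i = Some s" by (metis not_None_eq)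
  define L where "L = lit s"
  have lL: "lit (the (G j i)) = L" using s L_def by simp
  have gu: "gate i (x(j:=w)) \<longleftrightarrow> (w = L \<and> gate i (x(j := L)))" for x w
    using gate_upd[OF j, of x w] unfolding lL .
  define x0 where "x0 = (\<lambda>k. if k = p then hv p else if k \<in> Kset i then lit (the (G k i)) else 0)"
  have nk: "\<And>k. n \<le> k \<Longrightarrow> k \<notin> Kset i" using Kset_lt by (meson not_less)
  have x0c: "x0 \<in> configs 3 n" unfolding configs_def x0_def using nk lit_less hv_lt pn by auto
  have x0g: "gate i x0"
  proof -
    have "Kset i \<noteq> {}" using j by blast
    thus ?thesis unfolding gate_def x0_def using par_notin_Kset p_def by auto
  qed
  have x0j: "x0(j := L) = x0" using j jp s L_def by (auto simp: x0_def)
  have Fx0: "F (x0(j:=v)) i = (if v = L then hi i else 0)" for v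
  proof -
    have "(x0(j:=v)) p = hv p" using jp by (simp add: x0_def)
    moreover have "gate i (x0(j:=v)) \<longleftrightarrow> v = L" using gu[of x0 v] x0j x0g by simp
    ultimately show ?thesis using F_row[OF i hin] p_def by (simp add: R_def)
  qed
  have wp: "(x0(j:=v), x0(j:=w)) \<in> jpairs 3 n j" if "v < w" "w < 3" for v w
  proof -
    have "x0(j:=v) \<in> configs 3 n" using configs_upd[OF x0c jn] that by simp
    from jpairs_I[OF this jn] that show ?thesis by simp
  qed
  have pairF: "F a i = (if a p = hv p then (if a j = L \<and> gate i (a(j:=L)) then hi i else 0) else (if phi i (a p) then hi i else 0))
             \<and> F b i = (if a p = hv p then (if b j = L \<and> gate i (a(j:=L)) then hi i else 0) else (if phi i (a p) then hi i else 0))"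
    if ab: "(a,b) \<in> jpairs 3 n j" for a b
  proof -
    have b: "b = a(j := b j)" using jpairs_D[OF ab] by blast
    have bp: "b p = a p" using b jp by (metis fun_upd_other)
    have ga: "gate i a \<longleftrightarrow> (a j = L \<and> gate i (a(j:=L)))" using gu[of a "a j"] by simp
    have gb: "gate i b \<longleftrightarrow> (b j = L \<and> gate i (a(j:=L)))" using gu[of a "b j"] b by (metis fun_upd_upd)
    show ?thesis using F_row[OF i hin] ga gb bp p_def by (simp add: R_def)
  qed
  have pairD: "a j < b j \<and> b j < 3" if "(a,b) \<in> jpairs 3 n j" for a b
    using jpairs_D[OF that] jn by (auto simp: configs_def)
  show ?thesis
  proof (cases s)
    case Pos
    hence L: "L = 2" by (simp add: L_def lit_def)
    show ?thesis unfolding s Pos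
    proof (rule ig_pos[OF jn i])
      fix a b assume ab: "(a,b) \<in> jpairs 3 n j"
      show "F a i \<le> F b i" using pairF[OF ab] pairD[OF ab] L by auto
    next
      show "(x0(j:=0), x0(j:=2)) \<in> jpairs 3 n j" using wp by simp
      show "F (x0(j:=0)) i < F (x0(j:=2)) i" using Fx0 L hi_pos by simp
    qed
  next
    case Neg
    hence L: "L = 0" by (simp add: L_def lit_def)
    show ?thesis unfolding s Neg
    proof (rule ig_neg[OF jn i])
      fix a b assume ab: "(a,b) \<in> jpairs 3 n j"
      show "F a i \<ge> F b i" using pairF[OF ab] pairD[OF ab] L by auto
    next
      show "(x0(j:=0), x0(j:=2)) \<in> jpairs 3 n j" using wp by simp
      show "F (x0(j:=0)) i > F (x0(j:=2)) i" using Fx0 L hi_pos by simp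
    qed
  next
    case Null
    hence L: "L = 1" by (simp add: L_def lit_def)
    show ?thesis unfolding s Null
    proof (rule ig_null[OF jn i])
      show "(x0(j:=0), x0(j:=1)) \<in> jpairs 3 n j" using wp by simp
      show "F (x0(j:=0)) i < F (x0(j:=1)) i" using Fx0 L hi_pos by simp
      show "(x0(j:=1), x0(j:=2)) \<in> jpairs 3 n j" using wp by simp
      show "F (x0(j:=1)) i > F (x0(j:=2)) i" using Fx0 L hi_pos by simp
    qed
  qed
qed

lemma ig_all: "interaction_graph 3 n F = G"
proof (intro ext)
  fix j i
  show "interaction_graph 3 n F j i = G j i"
  proof (cases "j < n \<and> i < n")
    case False
    have "G j i = None" using arc_lt[of j i] False by blast
    thus ?thesis using ig_out[OF False] by simp
  next
    case True
    show ?thesis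
    proof (cases "G j i = None")
      case None: True
      have "F a i = F b i" if ab: "(a,b) \<in> jpairs 3 n j" for a b
      proof (rule F_local)
        fix k assume "G k i \<noteq> None"
        hence "k \<noteq> j" using None by auto
        thus "a k = b k" using ab by (auto simp: jpairs_def)
      qed
      thus ?thesis using None ig_none by (metis (no_types, lifting))
    next
      case False
      have hin: "hasin i" using False by (auto simp: hasin_def)
      show ?thesis
      proof (cases "j = par i")
        case True
        thus ?thesis using ig_par \<open>j < n \<and> i < n\<close> hin by blast
      next
        case jp: False
        have "j \<in> Kset i" using False jp by (auto simp: Kset_def)
        thus ?thesis using ig_K \<open>j < n \<and> i < n\<close> by blast
      qed
    qed
  qed
qed


definition CF :: "nat \<Rightarrow> nat \<Rightarrow> bool" where
  "CF i T \<longleftrightarrow> (\<forall>x y. (F ^^ T) x i = (F ^^ T) y i)"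

lemma F_Y: "(\<And>j. y j \<noteq> hv j) \<Longrightarrow> i < n \<Longrightarrow> hasin i \<Longrightarrow> F y i = (if phi i (y (par i)) then hi i else 0)"
  by (simp add: F_def Bf_def)

lemma CF_mono: assumes "CF i T" "T \<le> T'" shows "CF i T'"
proof -
  obtain d where d: "T' = T + d" using assms(2) le_Suc_ex by blast
  have "(F ^^ T') x = (F ^^ T) ((F ^^ d) x)" for x by (simp add: d funpow_add)
  thus ?thesis using assms(1) unfolding CF_def by simp
qed

lemma CF_noin: "\<not> (i < n \<and> hasin i) \<Longrightarrow> CF i 1"
  unfolding CF_def using F_out by simp

lemma phi_good:
  assumes i: "i < n" "hasin i" and g: "want i = tau (par i)"
  shows "phi i 0 = phi i (hi (par i))"
proof -
  obtain s where s: "G (par i) i = Some s" using par_arc[OF i] by (metis not_None_eq)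
  show ?thesis
  proof (cases "tau (par i)")
    case True
    hence "s = Null" using g s by (simp add: want_def)
    thus ?thesis using s True by (simp add: phi_def hi_def)
  next
    case False
    hence "s \<noteq> Null" using g s by (simp add: want_def)
    thus ?thesis using s False by (cases s) (simp_all add: phi_def hi_def)
  qed
qed

lemma F_vals: "F x j = 0 \<or> F x j = hi j"
  by (simp add: F_def)

lemma CF_good:
  assumes i: "i < n" "hasin i" and g: "want i = tau (par i)"
  shows "CF i 2"
proof -
  have "(F ^^ 2) x i = (if phi i 0 then hi i else 0)" for x
  proof -
    have "(F ^^ 2) x = F (F x)" by (simp add: numeral_2_eq_2)
    hence "(F ^^ 2) x i = (if phi i (F x (par i)) then hi i else 0)"
      using F_Y[OF F_avoid i] by simp
    moreover have "phi i (F x (par i)) = phi i 0"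
      using F_vals[of x "par i"] phi_good[OF i g] by auto
    ultimately show ?thesis by simp
  qed
  thus ?thesis unfolding CF_def by simp
qed

lemma CF_step:
  assumes i: "i < n" "hasin i" and c: "CF (par i) (Suc T)"
  shows "CF i (Suc (Suc T))"
proof -
  have eq: "(F ^^ Suc (Suc T)) x i = (if phi i ((F ^^ Suc T) x (par i)) then hi i else 0)" for x
  proof -
    have e: "(F ^^ Suc (Suc T)) x = F ((F ^^ Suc T) x)" by simp
    have "\<And>j. (F ^^ Suc T) x j \<noteq> hv j" using F_avoid by simp
    thus ?thesis using F_Y[OF _ i] e by simp
  qed
  show ?thesis unfolding CF_def
  proof (intro allI)
    fix x y
    have "(F ^^ Suc T) x (par i) = (F ^^ Suc T) y (par i)" using c unfolding CF_def by blast
    thus "(F ^^ Suc (Suc T)) x i = (F ^^ Suc (Suc T)) y i" unfolding eq by simp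
  qed
qed

lemma desc_sub: "desc v \<subseteq> {..<n}" by (auto simp: desc_def)
lemma desc_fin: "finite (desc v)" using desc_sub finite_subset by blast
lemma sz_le: "sz v \<le> n" unfolding sz_def using card_mono[OF _ desc_sub] by fastforce
lemma self_desc: "v < n \<Longrightarrow> v \<in> desc v" unfolding desc_def by (auto intro: exI[of _ 0])

lemma desc_trans: assumes "(par ^^ m) v = w" shows "desc v \<subseteq> desc w"
proof
  fix u assume "u \<in> desc v"
  then obtain a where u: "u < n" "(par ^^ a) u = v" by (auto simp: desc_def)
  have "(par ^^ (m + a)) u = w" using u assms by (simp add: funpow_add)
  thus "u \<in> desc w" using u by (auto simp: desc_def)
qed

lemma child_desc: "i \<in> children j \<Longrightarrow> desc i \<subseteq> desc j"
  using desc_trans[of 1 i j] by (auto simp: children_def)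

lemma tau_lemma:
  assumes i: "i \<in> children j" and w: "want i \<noteq> tau j"
  shows "\<exists>d\<in>children j. d \<noteq> i \<and> sz i \<le> sz d"
proof (cases "want i")
  case True
  hence nt: "\<not> tau j" using w by simp
  show ?thesis
  proof (rule ccontr)
    assume "\<not> ?thesis"
    hence "\<forall>d\<in>children j. sz d \<le> sz i" by force
    hence "tau j" using i True unfolding tau_def by blast
    thus False using nt by simp
  qed
next
  case False
  hence "tau j" using w by simp
  then obtain c where c: "c \<in> children j" "want c" "\<forall>d\<in>children j. sz d \<le> sz c"
    unfolding tau_def by blast
  have "c \<noteq> i" using c(2) False by blast
  thus ?thesis using c i by blast
qed

lemma uniq_aux:
  assumes a: "(par ^^ a) j = i" and pi: "par i = j" and b: "(par ^^ b) j = d"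
    and ab: "a \<le> b" and mn: "\<forall>b'<b. (par ^^ b') j \<noteq> d"
  shows "i = d"
proof (cases "a = b")
  case True thus ?thesis using a b by simp
next
  case False
  then obtain c where c: "b = Suc a + c" using ab by (metis le_Suc_ex le_neq_implies_less Suc_leI)
  have "(par ^^ Suc a) j = j" using a pi by simp
  hence "(par ^^ b) j = (par ^^ c) j" using c by (metis add.commute comp_apply funpow_add)
  hence "(par ^^ c) j = d" using b by simp
  moreover have "c < b" using c by simp
  ultimately show ?thesis using mn by blast
qed

lemma uniq:
  assumes i: "i \<in> children j" and d: "d \<in> children j"
    and a: "(par ^^ a) j = i" and b: "(par ^^ b) j = d"
  shows "i = d"
proof -
  define a0 where "a0 = (LEAST a. (par ^^ a) j = i)"
  define b0 where "b0 = (LEAST b. (par ^^ b) j = d)"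
  have a0: "(par ^^ a0) j = i" "\<forall>a'<a0. (par ^^ a') j \<noteq> i"
    unfolding a0_def using a by (auto intro: LeastI dest: not_less_Least)
  have b0: "(par ^^ b0) j = d" "\<forall>b'<b0. (par ^^ b') j \<noteq> d"
    unfolding b0_def using b by (auto intro: LeastI dest: not_less_Least)
  have pi: "par i = j" and pd: "par d = j" using i d by (auto simp: children_def)
  show ?thesis
  proof (cases "a0 \<le> b0")
    case True show ?thesis using uniq_aux[OF a0(1) pi b0(1) True b0(2)] by blast
  next
    case False
    hence "b0 \<le> a0" by simp
    thus ?thesis using uniq_aux[OF b0(1) pd a0(1) _ a0(2)] by simp
  qed
qed

definition notcyc :: "nat \<Rightarrow> bool" where "notcyc j \<longleftrightarrow> (\<forall>m. (par ^^ m) (par j) \<noteq> j)"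

lemma reach_cyc:
  assumes c: "c \<in> children j" and m: "(par ^^ m) j = c"
  shows "\<not> notcyc j"
proof -
  have "(par ^^ Suc m) j = j" using c m by (auto simp: children_def)
  hence "(par ^^ m) (par j) = j" by (simp add: funpow_Suc_right del: funpow.simps)
  thus ?thesis unfolding notcyc_def by blast
qed

lemma bad_notcyc:
  assumes i: "i < n" "hasin i" and b: "want i \<noteq> tau (par i)"
  shows "notcyc i"
proof (unfold notcyc_def, intro allI notI)
  fix m assume m: "(par ^^ m) (par i) = i"
  define j where "j = par i"
  have ic: "i \<in> children j" using i j_def by (simp add: children_def)
  obtain d where d: "d \<in> children j" "d \<noteq> i" "sz i \<le> sz d"
    using tau_lemma[OF ic] b j_def by blast
  have s1: "desc d \<subseteq> desc i"
    using child_desc[OF d(1)] desc_trans[of m j i] m j_def by blast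
  have ni: "i \<notin> desc d"
  proof
    assume "i \<in> desc d"
    then obtain b where bb: "(par ^^ b) i = d" by (auto simp: desc_def)
    have "b \<noteq> 0" using bb d(2) by (metis funpow_0)
    then obtain b' where "b = Suc b'" by (metis not0_implies_Suc)
    hence "(par ^^ b') j = d" using bb j_def by (simp add: funpow_Suc_right del: funpow.simps)
    thus False using uniq[OF ic d(1)] m j_def d(2) by metis
  qed
  have "insert i (desc d) \<subseteq> desc i" using s1 self_desc[OF i(1)] by blast
  hence "card (insert i (desc d)) \<le> sz i" unfolding sz_def using desc_fin card_mono by blast
  hence "sz d + 1 \<le> sz i" using ni desc_fin by (simp add: sz_def)
  thus False using d(3) by simp
qed

lemma disj_aux:
  assumes nc: "notcyc j" and i: "i \<in> children j" and d: "d \<in> children j" and ne: "i \<noteq> d"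
    and a: "(par ^^ a) u = i" and b: "(par ^^ b) u = d" and ab: "a \<le> b"
  shows False
proof -
  obtain c where c: "b = a + c" using ab le_Suc_ex by blast
  have "(par ^^ c) i = d" using a b c by (metis add.commute comp_apply funpow_add)
  moreover have "c \<noteq> 0" using calculation ne by (metis funpow_0)
  ultimately obtain c' where "(par ^^ Suc c') i = d" by (metis not0_implies_Suc)
  hence "(par ^^ c') (par i) = d" by (simp add: funpow_Suc_right del: funpow.simps)
  hence "(par ^^ c') j = d" using i by (simp add: children_def)
  thus False using reach_cyc[OF d] nc by blast
qed

lemma size_lemma:
  assumes nc: "notcyc j" and i: "i \<in> children j" and d: "d \<in> children j" and ne: "i \<noteq> d"
  shows "sz i + sz d + 1 \<le> sz j"
proof -
  have jn: "j < n" using i par_lt by (auto simp: children_def)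
  have dj: "desc i \<inter> desc d = {}"
  proof (rule ccontr)
    assume "desc i \<inter> desc d \<noteq> {}"
    then obtain u a b where a: "(par ^^ a) u = i" and b: "(par ^^ b) u = d"
      by (auto simp: desc_def)
    show False
    proof (cases "a \<le> b")
      case True thus False using disj_aux[OF nc i d ne a b] by simp
    next
      case False thus False using disj_aux[OF nc d i ne[symmetric] b a] by simp
    qed
  qed
  have jni: "j \<notin> desc i \<union> desc d"
  proof
    assume "j \<in> desc i \<union> desc d"
    then obtain m c where "c \<in> children j" "(par ^^ m) j = c" using i d by (auto simp: desc_def)
    thus False using reach_cyc nc by blast
  qed
  have "insert j (desc i \<union> desc d) \<subseteq> desc j"
    using child_desc[OF i] child_desc[OF d] self_desc[OF jn] by blast
  hence "card (insert j (desc i \<union> desc d)) \<le> sz j" unfolding sz_def using desc_fin card_mono by blast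
  moreover have "card (insert j (desc i \<union> desc d)) = sz i + sz d + 1"
    using jni dj desc_fin by (simp add: sz_def card_Un_disjoint)
  ultimately show ?thesis by simp
qed

definition bad :: "nat \<Rightarrow> bool" where "bad i \<longleftrightarrow> i < n \<and> hasin i \<and> want i \<noteq> tau (par i)"

lemma CF2_notbad: "i < n \<Longrightarrow> \<not> bad i \<Longrightarrow> CF i 2"
  using CF_good CF_noin CF_mono unfolding bad_def by (metis one_le_numeral)

lemma main:
  shows "i < n \<Longrightarrow> \<exists>T\<ge>2. CF i T \<and> 2^(T-2) * (sz i + 1) \<le> 2 * n"
proof (induction "n - sz i" arbitrary: i rule: less_induct)
  case less
  show ?case
  proof (cases "bad i")
    case False
    have "sz i + 1 \<le> 2 * n" using sz_le[of i] less.prems by simp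
    thus ?thesis using CF2_notbad[OF less.prems False] by (intro exI[of _ 2]) simp
  next
    case True
    hence i: "i < n" "hasin i" "want i \<noteq> tau (par i)" by (auto simp: bad_def)
    define j where "j = par i"
    have jn: "j < n" using par_lt[OF i(1,2)] j_def by simp
    have ic: "i \<in> children j" using i j_def by (simp add: children_def)
    show ?thesis
    proof (cases "bad j")
      case True
      hence jj: "j < n" "hasin j" "want j \<noteq> tau (par j)" by (auto simp: bad_def)
      have nc: "notcyc j" using bad_notcyc[OF jj] .
      obtain d where d: "d \<in> children j" "d \<noteq> i" "sz i \<le> sz d"
        using tau_lemma[OF ic] i(3) j_def by blast
      have sj: "sz i + sz d + 1 \<le> sz j" using size_lemma[OF nc ic d(1) d(2)[symmetric]] .
      have "n - sz j < n - sz i" using sj sz_le[of j] by linarith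
      then obtain T where T: "T \<ge> 2" "CF j T" "2^(T-2) * (sz j + 1) \<le> 2 * n"
        using less.hyps jn by blast
      obtain T' where T': "T = Suc (Suc T')" using T(1) by (metis add_2_eq_Suc le_Suc_ex)
      have cf: "CF i (Suc T)" using CF_step[OF i(1,2)] T(2) T' j_def by simp
      have "2^(Suc T - 2) * (sz i + 1) = 2^(T-2) * (2 * (sz i + 1))"
        using T' by simp
      also have "\<dots> \<le> 2^(T-2) * (sz j + 1)" using sj d(3) by (intro mult_le_mono2) presburger
      also have "\<dots> \<le> 2 * n" using T(3) .
      finally show ?thesis using cf T(1) by (intro exI[of _ "Suc T"]) simp
    next
      case False
      have cj: "CF j 2" using CF2_notbad[OF jn False] .
      have cf: "CF i 3" using CF_step[OF i(1,2)] cj j_def by (simp add: numeral_3_eq_3 numeral_2_eq_2)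
      have nc: "notcyc i" using bad_notcyc[OF i] .
      have "j \<notin> desc i"
      proof
        assume "j \<in> desc i"
        then obtain m where "(par ^^ m) (par i) = i" using j_def by (auto simp: desc_def)
        thus False using nc unfolding notcyc_def by blast
      qed
      hence "desc i \<subseteq> {..<n} - {j}" using desc_sub by blast
      hence "sz i \<le> card ({..<n} - {j})" unfolding sz_def by (simp add: card_mono)
      hence "sz i + 1 \<le> n" using jn by simp
      thus ?thesis using cf by (intro exI[of _ 3]) simp
    qed
  qed
qed


lemma final:
  assumes n1: "n \<ge> 1"
  shows "is_fun_over 3 n F \<and> admits 3 n G F \<and> nilpotent 3 n F
             \<and> nil_class 3 n F \<le> nat \<lfloor>log 2 (real n)\<rfloor> + 2"
proof -
  define K where "K = nat \<lfloor>log 2 (real n)\<rfloor> + 2"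
  have cfK: "CF i K" if i: "i < n" for i
  proof -
    obtain T where T: "T \<ge> 2" "CF i T" "2^(T-2) * (sz i + 1) \<le> 2 * n" using main[OF i] by blast
    have "sz i \<ge> 1" using self_desc[OF i] desc_fin unfolding sz_def
      by (metis One_nat_def Suc_leI card_gt_0_iff empty_iff)
    hence "2^(T-2) * 2 \<le> 2^(T-2) * (sz i + 1)" by (intro mult_le_mono2) simp
    hence "2^(T-2) * 2 \<le> 2 * n" using T(3) by (meson le_trans)
    hence "2^(T-2) \<le> n" by simp
    hence "T - 2 \<le> nat \<lfloor>log 2 (real n)\<rfloor>" by (rule log_bound)
    hence "T \<le> K" using T(1) unfolding K_def by simp
    thus ?thesis using CF_mono T(2) by blast
  qed
  have ci: "const_iter 3 n F K"
    unfolding const_iter_def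
  proof (intro exI ballI)
    fix x :: "nat \<Rightarrow> nat"
    show "(F ^^ K) x = (F ^^ K) (\<lambda>_. 0)"
    proof
      fix i
      show "(F ^^ K) x i = (F ^^ K) (\<lambda>_. 0) i"
      proof (cases "i < n")
        case True thus ?thesis using cfK unfolding CF_def by blast
      next
        case False
        have "K = Suc (K - 1)" unfolding K_def by simp
        hence "(F ^^ K) z i = F ((F ^^ (K - 1)) z) i" for z by (metis comp_apply funpow.simps(2))
        thus ?thesis using F_out False by simp
      qed
    qed
  qed
  have "is_fun_over 3 n F" unfolding is_fun_over_def using F_configs by blast
  moreover have "admits 3 n G F" unfolding admits_def using ig_all .
  moreover have "nilpotent 3 n F" unfolding nilpotent_def using ci by blast
  moreover have "nil_class 3 n F \<le> K" unfolding nil_class_def using ci by (rule Least_le)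
  ultimately show ?thesis unfolding K_def by blast
qed

end

theorem theorem1:
  fixes n :: nat and G :: sdigraph
  assumes "n \<ge> 1" and "sdigraph_on n G"
  shows "\<exists>f. is_fun_over 3 n f \<and> admits 3 n G f \<and> nilpotent 3 n f
             \<and> nil_class 3 n f \<le> nat \<lfloor>log 2 (real n)\<rfloor> + 2"
proof -
  interpret L n G by unfold_locales (rule assms(2))
  show ?thesis using final[OF assms(1)] by blast
qed

end
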